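(* Let $TS=(S,\to,T,s_0)$ be the labelled transition system with states $S=\{s_0,s_1,s_2,s_3,s_4,s_5,s_6\}$, labels $T=\{a,b,c,d\}$, initial state $s_0$, and exactly the following ten arcs: $s_0\xrightarrow{a}s_1$, $s_0\xrightarrow{b}s_2$, $s_1\xrightarrow{b}s_3$, $s_2\xrightarrow{a}s_3$, $s_3\xrightarrow{c}s_4$, $s_4\xrightarrow{a}s_5$, $s_4\xrightarrow{d}s_0$, $s_5\xrightarrow{b}s_6$, $s_5\xrightarrow{d}s_1$, $s_6\xrightarrow{d}s_3$. Then there is no safe (i.e. $1$-bounded) Petri net with transition set $\{a,b,c,d\}$ that solves $TS$. More precisely, in every Petri net $N$ with transition set $\{a,b,c,d\}$ solving $TS$, if $M_4$ denotes the reachable marking corresponding to $s_4$, there is a place $p$ with $M_4(p)<F(p,b)$, and every such place $p$ carries at least $2$ tokens in the marking reached from $M_4$ by firing $ad$.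
   Context: A Petri net is a tuple $N=(P,T,F,M_0)$ with finite disjoint sets $P$ (places) and $T$ (transitions), a flow function $F\colon (P\times T)\cup(T\times P)\to\mathbb{N}$, and an initial marking $M_0\colon P\to\mathbb{N}$. A transition $t$ is enabled at a marking $M$ if $M(p)\ge F(p,t)$ for all $p\in P$; firing it yields $M'$ with $M'(p)=M(p)-F(p,t)+F(t,p)$. The reachability graph of $N$ is the labelled transition system whose states are the markings reachable from $M_0$, with initial state $M_0$ and arcs $(M,t,M')$ whenever $M$ is reachable and $t$ fires from $M$ to $M'$. $N$ solves a labelled transition system $TS$ (with label set equal to $T$) if its reachability graph is isomorphic to $TS$, i.e. there is a bijection between states mapping initial state to initial state and preserving and reflecting labelled arcs. $N$ is $k$-bounded if $M(p)\le k$ for every reachable marking $M$ and every place $p$; safe means $1$-bounded. *)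

theory Defs
  imports Main
begin

datatype lab = a | b | c | d

datatype st = s0 | s1 | s2 | s3 | s4 | s5 | s6

fun ts_arc :: "st \<Rightarrow> lab \<Rightarrow> st \<Rightarrow> bool" where
  "ts_arc x l y \<longleftrightarrow>
     (x, l, y) \<in> {(s0, a, s1), (s0, b, s2), (s1, b, s3), (s2, a, s3), (s3, c, s4),
                   (s4, a, s5), (s4, d, s0), (s5, b, s6), (s5, d, s1), (s6, d, s3)}"

text \<open>A Petri net with finite place type 'p and transition set lab is given by
  pre p t = F(p,t), post t p = F(t,p), and an initial marking M0.\<close>

definition enabled :: "('p \<Rightarrow> lab \<Rightarrow> nat) \<Rightarrow> ('p \<Rightarrow> nat) \<Rightarrow> lab \<Rightarrow> bool" where
  "enabled pre M t \<longleftrightarrow> (\<forall>p. pre p t \<le> M p)"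

definition fire :: "('p \<Rightarrow> lab \<Rightarrow> nat) \<Rightarrow> (lab \<Rightarrow> 'p \<Rightarrow> nat) \<Rightarrow> ('p \<Rightarrow> nat) \<Rightarrow> lab \<Rightarrow> ('p \<Rightarrow> nat)" where
  "fire pre post M t = (\<lambda>p. M p - pre p t + post t p)"

inductive reachable :: "('p \<Rightarrow> lab \<Rightarrow> nat) \<Rightarrow> (lab \<Rightarrow> 'p \<Rightarrow> nat) \<Rightarrow> ('p \<Rightarrow> nat) \<Rightarrow> ('p \<Rightarrow> nat) \<Rightarrow> bool"
  for pre post M0 where
  init: "reachable pre post M0 M0"
| step: "reachable pre post M0 M \<Longrightarrow> enabled pre M t \<Longrightarrow> reachable pre post M0 (fire pre post M t)"

definition is_iso :: "('p \<Rightarrow> lab \<Rightarrow> nat) \<Rightarrow> (lab \<Rightarrow> 'p \<Rightarrow> nat) \<Rightarrow> ('p \<Rightarrow> nat) \<Rightarrow> (st \<Rightarrow> ('p \<Rightarrow> nat)) \<Rightarrow> bool" where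
  "is_iso pre post M0 f \<longleftrightarrow>
     bij_betw f UNIV {M. reachable pre post M0 M} \<and> f s0 = M0 \<and>
     (\<forall>x l y. ts_arc x l y \<longleftrightarrow> (enabled pre (f x) l \<and> fire pre post (f x) l = f y))"

definition solves :: "('p \<Rightarrow> lab \<Rightarrow> nat) \<Rightarrow> (lab \<Rightarrow> 'p \<Rightarrow> nat) \<Rightarrow> ('p \<Rightarrow> nat) \<Rightarrow> bool" where
  "solves pre post M0 \<longleftrightarrow> (\<exists>f. is_iso pre post M0 f)"

definition k_bounded :: "nat \<Rightarrow> ('p \<Rightarrow> lab \<Rightarrow> nat) \<Rightarrow> (lab \<Rightarrow> 'p \<Rightarrow> nat) \<Rightarrow> ('p \<Rightarrow> nat) \<Rightarrow> bool" where
  "k_bounded k pre post M0 \<longleftrightarrow> (\<forall>M. reachable pre post M0 M \<longrightarrow> (\<forall>p. M p \<le> k))"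

abbreviation safe :: "('p \<Rightarrow> lab \<Rightarrow> nat) \<Rightarrow> (lab \<Rightarrow> 'p \<Rightarrow> nat) \<Rightarrow> ('p \<Rightarrow> nat) \<Rightarrow> bool" where
  "safe pre post M0 \<equiv> k_bounded 1 pre post M0"

end

theory Submission
  imports Defs
begin

lemma key:
  fixes pre :: "'p::finite \<Rightarrow> lab \<Rightarrow> nat"
  assumes iso: "is_iso pre post M0 f"
  shows "(\<exists>p. f s4 p < pre p b) \<and>
         (\<forall>p. f s4 p < pre p b \<longrightarrow> 2 \<le> fire pre post (fire pre post (f s4) a) d p)"
proof -
  have bij: "bij_betw f UNIV {M. reachable pre post M0 M}"
    and arcs: "\<And>x l y. ts_arc x l y \<longleftrightarrow> (enabled pre (f x) l \<and> fire pre post (f x) l = f y)"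
    using iso unfolding is_iso_def by auto
  have A: "enabled pre (f x) l \<and> fire pre post (f x) l = f y" if "ts_arc x l y" for x l y
    using arcs that by blast
  have r4: "reachable pre post M0 (f s4)" using bij bij_betw_apply by fastforce
  have nb: "\<not> enabled pre (f s4) b"
  proof
    assume e: "enabled pre (f s4) b"
    then have "reachable pre post M0 (fire pre post (f s4) b)" using r4 reachable.step by blast
    then have "fire pre post (f s4) b \<in> f ` UNIV" using bij by (simp add: bij_betw_def)
    then obtain y where "fire pre post (f s4) b = f y" by auto
    with e have "ts_arc s4 b y" using arcs by blast
    then show False by simp
  qed
  have e01: "enabled pre (f s0) a" "fire pre post (f s0) a = f s1" using A[of s0 a s1] by auto
  have e02: "enabled pre (f s0) b" using A[of s0 b s2] by auto
  have e13: "enabled pre (f s1) b" using A[of s1 b s3] by auto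
  have e45: "enabled pre (f s4) a" "fire pre post (f s4) a = f s5" using A[of s4 a s5] by auto
  have e40: "enabled pre (f s4) d" "fire pre post (f s4) d = f s0" using A[of s4 d s0] by auto
  have e56: "enabled pre (f s5) b" using A[of s5 b s6] by auto
  have e51: "enabled pre (f s5) d" "fire pre post (f s5) d = f s1" using A[of s5 d s1] by auto
  show ?thesis
  proof
    show "\<exists>p. f s4 p < pre p b" using nb unfolding enabled_def by (meson not_le)
    show "\<forall>p. f s4 p < pre p b \<longrightarrow> 2 \<le> fire pre post (fire pre post (f s4) a) d p"
    proof (intro allI impI)
      fix p assume lt: "f s4 p < pre p b"
      have h1: "f s1 p = f s0 p - pre p a + post a p" "pre p a \<le> f s0 p"
        using e01 unfolding enabled_def fire_def by (auto dest: fun_cong[where x=p])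
      have h5: "f s5 p = f s4 p - pre p a + post a p" "pre p a \<le> f s4 p"
        using e45 unfolding enabled_def fire_def by (auto dest: fun_cong[where x=p])
      have "pre p b \<le> f s0 p" using e02 unfolding enabled_def by auto
      moreover have "pre p b \<le> f s5 p" using e56 unfolding enabled_def by auto
      ultimately have "2 \<le> f s1 p" using h1 h5 lt by linarith
      then show "2 \<le> fire pre post (fire pre post (f s4) a) d p" using e45 e51 by simp
    qed
  qed
qed

theorem mainTheorem1:
  fixes pre :: "'p::finite \<Rightarrow> lab \<Rightarrow> nat"
    and post :: "lab \<Rightarrow> 'p \<Rightarrow> nat"
    and M0 :: "'p \<Rightarrow> nat"
  assumes "solves pre post M0"
  shows "\<not> safe pre post M0 \<and>
         (\<forall>f. is_iso pre post M0 f \<longrightarrow>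
              (\<exists>p. f s4 p < pre p b) \<and>
              (\<forall>p. f s4 p < pre p b \<longrightarrow>
                   2 \<le> fire pre post (fire pre post (f s4) a) d p))"
proof
  obtain f where iso: "is_iso pre post M0 f" using assms solves_def by blast
  then obtain p where p: "f s4 p < pre p b" and g: "2 \<le> fire pre post (fire pre post (f s4) a) d p"
    using key by blast
  have bij: "bij_betw f UNIV {M. reachable pre post M0 M}" using iso is_iso_def by blast
  have ar: "\<And>x l y. ts_arc x l y \<Longrightarrow> fire pre post (f x) l = f y"
    using iso unfolding is_iso_def by blast
  have "fire pre post (f s4) a = f s5" using ar[of s4 a s5] by simp
  moreover have "fire pre post (f s5) d = f s1" using ar[of s5 d s1] by simp
  ultimately have "fire pre post (fire pre post (f s4) a) d = f s1" by simp
  moreover have "reachable pre post M0 (f s1)" using bij bij_betw_apply by fastforce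
  ultimately show "\<not> safe pre post M0" using g unfolding k_bounded_def
    by (metis numeral_le_one_iff semiring_norm(69) order_trans)
  show "\<forall>f. is_iso pre post M0 f \<longrightarrow> (\<exists>p. f s4 p < pre p b) \<and>
              (\<forall>p. f s4 p < pre p b \<longrightarrow> 2 \<le> fire pre post (fire pre post (f s4) a) d p)"
    using key by blast
qed

end
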